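(* For $0<x\le y<1$, $$I(x,y):=\int_0^{\mathrm{arcosh}(1/y)}\frac{dt}{\sqrt{1-x^2\cosh^2t}}\le K\big(\sqrt{1-x^2}\big),$$ with equality only for $x=y$.
   Context: $K(k)=\int_0^{\pi/2}(1-k^2\sin^2\tau)^{-1/2}d\tau$ is the complete elliptic integral of the first kind, $0\le k<1$. *)

theory Defs
  imports "HOL-Analysis.Analysis"
begin

definition ellipK :: "real \<Rightarrow> real" where
  "ellipK k = integral {0..pi/2} (\<lambda>\<tau>. 1 / sqrt (1 - k^2 * (sin \<tau>)^2))"

definition Ixy :: "real \<Rightarrow> real \<Rightarrow> real" where
  "Ixy x y = integral {0..arcosh (1/y)} (\<lambda>t. 1 / sqrt (1 - x^2 * (cosh t)^2))"

end

theory Submission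
  imports Defs
begin

lemma arcsin_nonneg': "0 \<le> y \<Longrightarrow> y \<le> 1 \<Longrightarrow> 0 \<le> arcsin (y::real)"
  using arcsin_le_mono[of 0 y] by simp

lemma arcsin_pos': "0 < y \<Longrightarrow> y \<le> 1 \<Longrightarrow> 0 < arcsin (y::real)"
  using arcsin_less_mono[of 0 y] by simp

theorem lemma6:
  fixes x y :: real
  assumes "0 < x" and "x \<le> y" and "y < 1"
  shows "Ixy x y \<le> ellipK (sqrt (1 - x^2)) \<and> (Ixy x y = ellipK (sqrt (1 - x^2)) \<longleftrightarrow> x = y)"
proof -
  define k where "k = sqrt (1 - x^2)"
  have x1: "x < 1" using assms by linarith
  have x2: "x^2 < 1" using assms x1 by (simp add: power_less_one_iff abs_less_iff)
  have kpos: "k > 0" using x2 by (simp add: k_def)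
  have k2: "k^2 = 1 - x^2" using x2 by (simp add: k_def)
  define h where "h = (\<lambda>\<tau>::real. 1 / sqrt (1 - k^2 * (sin \<tau>)^2))"
  have hden: "1 - k^2 * (sin \<tau>)^2 \<ge> x^2" for \<tau>
  proof -
    have "(sin \<tau>)^2 \<le> 1" using sin_cos_squared_add[of \<tau>] zero_le_power2[of "cos \<tau>"] by linarith
    then have "k^2 * (sin \<tau>)^2 \<le> k^2" using kpos by (simp add: mult_left_le)
    then show ?thesis using k2 by simp
  qed
  have hnz: "1 - k^2 * (sin \<tau>)^2 \<noteq> 0" for \<tau>
    using hden[of \<tau>] assms(1) by (smt (verit) zero_less_power)
  have hcont: "continuous_on S h" for S
    unfolding h_def by (intro continuous_intros) (use hnz in auto)
  have hge1: "h \<tau> \<ge> 1" for \<tau>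
  proof -
    have "x^2 > 0" using assms by simp
    have a: "0 < 1 - k^2 * (sin \<tau>)^2" using hden[of \<tau>] \<open>x^2 > 0\<close> by linarith
    have "k^2 * (sin \<tau>)^2 \<ge> 0" by simp
    then have "1 - k^2 * (sin \<tau>)^2 \<le> 1" by linarith
    then have "sqrt (1 - k^2 * (sin \<tau>)^2) \<le> 1" by simp
    moreover have "sqrt (1 - k^2 * (sin \<tau>)^2) > 0" using a by simp
    ultimately show ?thesis unfolding h_def by simp
  qed
  define E where "E = (\<lambda>s. integral {0..s} h)"
  have Econt: "continuous_on {0..2} E"
    unfolding E_def by (rule indefinite_integral_continuous_1, rule integrable_continuous_real, rule hcont)
  have Eder: "(E has_real_derivative h s) (at s)" if "0 < s" "s < 2" for s
  proof -
    have "(E has_real_derivative h s) (at s within {0..2})"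
      unfolding E_def by (rule integral_has_real_derivative[OF hcont]) (use that in auto)
    moreover have "s \<in> interior {0..2::real}" using that by simp
    ultimately show ?thesis by (metis at_within_interior)
  qed
  have Ege: "E s \<ge> s" if "0 \<le> s" for s
  proof -
    have "(h has_integral E s) {0..s}" unfolding E_def
      by (rule integrable_integral, rule integrable_continuous_real, rule hcont)
    moreover have "((\<lambda>_. 1::real) has_integral s) {0..s}"
      using has_integral_const_real[of "1::real" 0 s] that by simp
    ultimately show ?thesis using has_integral_le hge1 by metis
  qed
  have E0: "E 0 = 0" unfolding E_def by simp
  have K: "ellipK (sqrt (1 - x^2)) = E (pi/2)"
    unfolding ellipK_def E_def h_def k_def by simp
  define a where "a = arcosh (1/y)"
  have y0: "y > 0" using assms by linarith
  have y1: "1/y > 1" using y0 assms by simp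
  have a0: "a > 0" unfolding a_def using y1
    by (metis arcosh_eq_0_iff_real arcosh_nonneg_real less_eq_real_def less_irrefl)
  have cosha: "cosh a = 1/y" unfolding a_def using y1 by simp
  define w where "w = (\<lambda>t. 1 - x^2 * (cosh t)^2)"
  define u where "u = (\<lambda>t. sqrt (w t) / k)"
  define G where "G = (\<lambda>t. - E (arcsin (u t)))"
  have cosh_le: "cosh t \<le> 1/x" if "t \<in> {0..a}" for t
  proof -
    have "cosh t \<le> cosh a" using that by (simp add: cosh_real_nonneg_le_iff)
    also have "\<dots> \<le> 1/x" using cosha assms by (simp add: frac_le)
    finally show ?thesis .
  qed
  have w_bounds: "0 \<le> w t \<and> w t \<le> k^2" if "t \<in> {0..a}" for t
  proof -
    have c1: "cosh t \<ge> 1" by (rule cosh_real_ge_1)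
    have "x * cosh t \<le> 1" using cosh_le[OF that] assms(1) by (simp add: field_simps)
    moreover have "x * cosh t \<ge> 0" using assms(1) by simp
    ultimately have "(x * cosh t)^2 \<le> 1" by (simp add: power_le_one)
    moreover have "(x * cosh t)^2 \<ge> x^2" using c1 assms(1)
      by (simp add: power_mono)
    ultimately show ?thesis unfolding w_def using k2 by (simp add: power_mult_distrib)
  qed
  have u_bounds: "0 \<le> u t \<and> u t \<le> 1" if "t \<in> {0..a}" for t
  proof -
    have "sqrt (w t) \<le> k" using w_bounds[OF that] kpos
      by (metis real_le_lsqrt less_imp_le real_sqrt_ge_zero)
    then show ?thesis unfolding u_def using kpos w_bounds[OF that] by simp
  qed
  have Gcont: "continuous_on {0..a} G"
  proof -
    have ucont: "continuous_on {0..a} u" unfolding u_def w_def by (intro continuous_intros) (use kpos in auto)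
    have "continuous_on {0..a} (\<lambda>t. arcsin (u t))"
      by (rule continuous_on_arcsin[OF ucont]) (use u_bounds in fastforce)+
    moreover have "(\<lambda>t. arcsin (u t)) ` {0..a} \<subseteq> {0..2}"
    proof
      fix s assume "s \<in> (\<lambda>t. arcsin (u t)) ` {0..a}"
      then obtain t where t: "t \<in> {0..a}" "s = arcsin (u t)" by auto
      have "arcsin (u t) \<le> pi/2" using arcsin_bounded[of "u t"] u_bounds[OF t(1)] by auto
      moreover have "arcsin (u t) \<ge> 0" using u_bounds[OF t(1)] by (simp add: arcsin_nonneg')
      ultimately show "s \<in> {0..2}" using t pi_less_4 by auto
    qed
    ultimately have "continuous_on {0..a} (\<lambda>t. E (arcsin (u t)))"
      using continuous_on_compose2[OF Econt] by blast
    then show ?thesis unfolding G_def by (intro continuous_intros)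
  qed
  have Gder: "(G has_real_derivative 1 / sqrt (1 - x^2 * (cosh t)^2)) (at t)" if t: "t \<in> {0<..<a}" for t
  proof -
    have tc: "t \<in> {0..a}" using t by auto
    have c1: "cosh t > 1" using t cosh_real_strict_mono[of 0 t] by simp
    have s1: "sinh t > 0" using t by simp
    have "cosh t < 1/y" using t cosha cosh_real_strict_mono[of t a] by simp
    also have "\<dots> \<le> 1/x" using assms by (simp add: frac_le)
    finally have "x * cosh t < 1" using assms(1) by (simp add: field_simps)
    moreover have "x * cosh t > 0" using assms(1) by simp
    ultimately have "(x * cosh t)^2 < 1" by (simp add: power_less_one_iff abs_less_iff)
    then have wpos: "w t > 0" unfolding w_def by (simp add: power_mult_distrib)
    have "(x * cosh t)^2 > x^2" using c1 assms(1)
      by (simp add: power_mult_distrib)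
    then have wk: "w t < k^2" unfolding w_def using k2 by (simp add: power_mult_distrib)
    have sw: "sqrt (w t) < k" using wk kpos wpos
      by (metis real_sqrt_less_iff real_sqrt_unique less_imp_le)
    have u1: "u t < 1" "u t > 0" unfolding u_def using sw kpos wpos by auto
    have dw: "(w has_real_derivative -(x^2 * (2 * cosh t * sinh t))) (at t)"
      unfolding w_def by (auto intro!: derivative_eq_intros simp: power2_eq_square)
    have du: "(u has_real_derivative (inverse (sqrt (w t)) / 2 * -(x^2 * (2 * cosh t * sinh t))) / k) (at t)"
      unfolding u_def
      by (rule DERIV_cdivide, rule DERIV_chain2[OF DERIV_real_sqrt[OF wpos] dw])
    have dphi: "((\<lambda>t. arcsin (u t)) has_real_derivative inverse (sqrt (1 - (u t)^2)) * ((inverse (sqrt (w t)) / 2 * -(x^2 * (2 * cosh t * sinh t))) / k)) (at t)"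
      by (rule DERIV_chain2[OF DERIV_arcsin du]) (use u1 in auto)
    have phi_in: "0 < arcsin (u t)" "arcsin (u t) < 2"
    proof -
      show "0 < arcsin (u t)" using u1 by (simp add: arcsin_pos')
      have "arcsin (u t) \<le> pi/2" using arcsin_bounded[of "u t"] u1 by auto
      then show "arcsin (u t) < 2" using pi_less_4 by linarith
    qed
    have dG: "(G has_real_derivative - (h (arcsin (u t)) * (inverse (sqrt (1 - (u t)^2)) * ((inverse (sqrt (w t)) / 2 * -(x^2 * (2 * cosh t * sinh t))) / k)))) (at t)"
      unfolding G_def by (rule DERIV_minus, rule DERIV_chain2[OF Eder[OF phi_in] dphi])
    have usq: "(u t)^2 = w t / k^2" unfolding u_def using wpos by (simp add: power_divide)
    have e1: "1 - (u t)^2 = (x * sinh t / k)^2"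
      unfolding usq w_def using k2 kpos cosh_square_eq[of t]
      by (simp add: field_simps power_mult_distrib)
    have e1': "sqrt (1 - (u t)^2) = x * sinh t / k"
      unfolding e1 using assms(1) s1 kpos by simp
    have e2: "1 - k^2 * (sin (arcsin (u t)))^2 = (x * cosh t)^2"
      using u1 usq kpos unfolding w_def by (simp add: power_mult_distrib)
    have e2': "h (arcsin (u t)) = 1 / (x * cosh t)"
      unfolding h_def e2 using assms(1) by simp
    have "- (h (arcsin (u t)) * (inverse (sqrt (1 - (u t)^2)) * ((inverse (sqrt (w t)) / 2 * -(x^2 * (2 * cosh t * sinh t))) / k)))
       = 1 / sqrt (w t)"
      unfolding e1' e2' using assms(1) s1 kpos c1 wpos
      by (simp add: field_simps power2_eq_square)
    then show ?thesis using dG unfolding w_def by simp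
  qed
  have int: "((\<lambda>t. 1 / sqrt (1 - x^2 * (cosh t)^2)) has_integral (G a - G 0)) {0..a}"
    using a0 Gcont Gder
    by (intro fundamental_theorem_of_calculus_interior)
       (auto simp: has_real_derivative_iff_has_vector_derivative)
  have I: "Ixy x y = G a - G 0"
    unfolding Ixy_def a_def[symmetric] using int by (simp add: integral_unique)
  have G0: "G 0 = - E (pi/2)"
    unfolding G_def u_def w_def k_def using x2 by simp
  define v where "v = sqrt (1 - x^2 / y^2) / k"
  have Ga: "G a = - E (arcsin v)"
    unfolding G_def u_def w_def v_def cosha by (simp add: power_divide)
  have vb: "0 \<le> v \<and> v \<le> 1" unfolding v_def
    using u_bounds[of a] a0 unfolding u_def w_def cosha by (simp add: power_divide)
  have main: "Ixy x y = ellipK (sqrt (1 - x^2)) - E (arcsin v)"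
    using I G0 Ga K by simp
  show ?thesis
  proof (cases "x = y")
    case True
    then have "v = 0" unfolding v_def using assms by simp
    then show ?thesis using main E0 True by simp
  next
    case False
    then have "x < y" using assms by simp
    then have "x^2 < y^2" using assms(1) by (simp add: power_strict_mono)
    then have "x^2 / y^2 < 1" using y0 by simp
    then have "v > 0" unfolding v_def using kpos by simp
    then have "arcsin v > 0" using vb by (simp add: arcsin_pos')
    then have "E (arcsin v) > 0" using Ege[of "arcsin v"] by simp
    then show ?thesis using main False by simp
  qed
qed

end
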